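(* For $\epsilon,\delta\ge 0$ and a set $X$, let $\mathsf{DPR}(\epsilon,\delta)(X)$ be the set $D X$ with the relation $\mu\sim\nu$ iff for all $S\subseteq X$, $\mu(S)\le e^{\epsilon}\nu(S)+\delta$ and $\nu(S)\le e^{\epsilon}\mu(S)+\delta$. Then $\mathsf{DPR}$, viewed as a map $\mathbb{R}_{\ge0}\times\mathbb{R}_{\ge0}\to\mathbf{Ord}(q,D)$, is an $(\mathbb{R}^+_{\ge0}\times\mathbb{R}^+_{\ge0})$-graded $\times$-parameterized assignment of $\mathsf{RSRel}$ on the distribution monad $\mathcal{D}$. Concretely: $\mathsf{DPR}$ is monotone (if $\epsilon\le\epsilon'$, $\delta\le\delta'$ then $\mu\sim_{\mathsf{DPR}(\epsilon,\delta)(X)}\nu$ implies $\mu\sim_{\mathsf{DPR}(\epsilon',\delta')(X)}\nu$), and for all sets $X,Y$, all $\epsilon,\delta,\epsilon',\delta'\ge0$, all $f,g:X\to D Y$ with $f(x)\sim_{\mathsf{DPR}(\epsilon',\delta')(Y)}g(x)$ for every $x\in X$, and all $\mu\sim_{\mathsf{DPR}(\epsilon,\delta)(X)}\nu$, we have $f^\dagger(\mu)\sim_{\mathsf{DPR}(\epsilon+\epsilon',\delta+\delta')(Y)}g^\dagger(\nu)$.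
   Context: $D X$ is the set of discrete probability distributions on $X$ (functions $\mu:X\to[0,1]$ with countable support summing to $1$), $\mu(S)=\sum_{x\in S}\mu(x)$, and for $f:X\to D Y$, $f^\dagger(\mu)(y)=\sum_x f(x)(y)\mu(x)$. $\mathsf{RSRel}$ is the category whose objects are sets with a reflexive symmetric relation and whose morphisms are relation-preserving functions; $q:\mathsf{RSRel}\to\mathsf{Set}$ is the forgetful functor. $\mathbf{Ord}(q,D)$ is the class of maps assigning to each set $X$ a reflexive symmetric relation on $D X$. $\mathbb{R}^+_{\ge0}$ is the additive monoid of nonnegative reals with the usual order, and the product monoid is ordered componentwise. In $\mathsf{RSRel}$ (with product $(x,y)\sim(x',y')$ iff $x\sim x'$ and $y\sim y'$), for a set $X$ and object $Z$, $X\dot\pitchfork Z$ is the set of functions $X\to|Z|$ with $h\sim h'$ iff $h(x)\sim h'(x)$ for all $x$; a graded $\times$-parameterized assignment $\Delta$ requires that $(h,\mu)\mapsto h^\dagger(\mu)$ be relation-preserving $(X\dot\pitchfork\Delta\alpha Y)\times\Delta\beta X\to\Delta(\beta\cdot\alpha)Y$ for all grades, with $\Delta$ monotone in the grade. *)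

theory Defs
  imports "HOL-Probability.Probability_Mass_Function"
begin

text \<open>Discrete distributions D X are modelled by the library type 'a pmf;
  mu(S) is measure_pmf.prob mu S, and the Kleisli extension f-dagger(mu) is bind_pmf mu f.\<close>

definition DPR :: "real \<Rightarrow> real \<Rightarrow> 'a pmf \<Rightarrow> 'a pmf \<Rightarrow> bool" where
  "DPR eps del mu nu \<longleftrightarrow>
     (\<forall>S. measure_pmf.prob mu S \<le> exp eps * measure_pmf.prob nu S + del \<and>
          measure_pmf.prob nu S \<le> exp eps * measure_pmf.prob mu S + del)"

end

theory Submission
  imports Defs
begin

lemma bind_prob:
  "measure_pmf.prob (bind_pmf mu f) S = (\<integral>x. measure_pmf.prob (f x) S \<partial>measure_pmf mu)"
  unfolding measure_pmf_bind
  apply (rule measure_pmf.measure_bind)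
  using measurable_measure_pmf[of f] by auto

lemma int_pmf:
  fixes h :: "'a \<Rightarrow> real"
  shows "(\<integral>x. h x \<partial>measure_pmf p) = (\<integral>x. pmf p x * h x \<partial>count_space UNIV)"
  by (simp add: measure_pmf_eq_density integral_density pmf_nonneg)

lemma integ_pmf:
  fixes h :: "'a \<Rightarrow> real"
  assumes "\<And>x. \<bar>h x\<bar> \<le> 1"
  shows "integrable (count_space UNIV) (\<lambda>x. pmf p x * h x)"
proof (rule Bochner_Integration.integrable_bound[OF integrable_pmf[of UNIV p]])
  show "(\<lambda>x. pmf p x * h x) \<in> borel_measurable (count_space UNIV)" by simp
  show "AE x in count_space UNIV. norm (pmf p x * h x) \<le> norm (pmf p x)"
    using assms by (auto simp: abs_mult intro!: mult_left_le)
qed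

lemma prob_pmf_int:
  "measure_pmf.prob p S = (\<integral>x. pmf p x * indicator S x \<partial>count_space UNIV)"
proof -
  have "measure_pmf.prob p S = (\<integral>x. indicator S x \<partial>measure_pmf p)"
    by (simp add: measure_pmf.emeasure_finite)
  then show ?thesis by (rule trans) (rule int_pmf)
qed

lemma key:
  fixes h :: "'a \<Rightarrow> real"
  assumes e: "0 \<le> e"
    and H: "\<And>S. measure_pmf.prob mu S \<le> e * measure_pmf.prob nu S + d"
    and h0: "\<And>x. 0 \<le> h x" and h1: "\<And>x. h x \<le> 1"
  shows "(\<integral>x. h x \<partial>measure_pmf mu) \<le> e * (\<integral>x. h x \<partial>measure_pmf nu) + d"
proof -
  define T where "T = {x. pmf mu x > e * pmf nu x}"
  define M where "M = (count_space UNIV :: 'a measure)"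
  have hb: "\<And>x. \<bar>h x\<bar> \<le> 1" using h0 h1 by (simp add: abs_le_iff)
  have ib: "\<And>x. \<bar>indicator T x :: real\<bar> \<le> 1" by (simp add: indicator_def)
  have pw: "pmf mu x * h x + e * (pmf nu x * indicator T x)
      \<le> e * (pmf nu x * h x) + pmf mu x * indicator T x" for x
  proof (cases "x \<in> T")
    case True
    then have "pmf mu x - e * pmf nu x \<ge> 0" by (simp add: T_def)
    moreover have "1 - h x \<ge> 0" using h1[of x] by simp
    ultimately have "(pmf mu x - e * pmf nu x) * (1 - h x) \<ge> 0" by simp
    then show ?thesis using True by (simp add: algebra_simps)
  next
    case False
    then have "pmf mu x \<le> e * pmf nu x" by (simp add: T_def)
    then have "pmf mu x * h x \<le> e * pmf nu x * h x" using h0[of x] by (rule mult_right_mono)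
    then show ?thesis using False by (simp add: algebra_simps)
  qed
  have I1: "integrable M (\<lambda>x. pmf mu x * h x)" "integrable M (\<lambda>x. pmf nu x * h x)"
    "integrable M (\<lambda>x. pmf mu x * indicator T x)" "integrable M (\<lambda>x. pmf nu x * indicator T x)"
    unfolding M_def using integ_pmf hb ib by blast+
  have "(\<integral>x. pmf mu x * h x + e * (pmf nu x * indicator T x) \<partial>M)
      \<le> (\<integral>x. e * (pmf nu x * h x) + pmf mu x * indicator T x \<partial>M)"
    by (rule integral_mono) (use I1 pw in auto)
  then have "(\<integral>x. pmf mu x * h x \<partial>M) + e * (\<integral>x. pmf nu x * indicator T x \<partial>M)
      \<le> e * (\<integral>x. pmf nu x * h x \<partial>M) + (\<integral>x. pmf mu x * indicator T x \<partial>M)"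
    using I1 by (simp add: integral_add)
  moreover have "(\<integral>x. pmf mu x * indicator T x \<partial>M) \<le> e * (\<integral>x. pmf nu x * indicator T x \<partial>M) + d"
    using H[of T] unfolding prob_pmf_int M_def .
  ultimately have "(\<integral>x. pmf mu x * h x \<partial>M) \<le> e * (\<integral>x. pmf nu x * h x \<partial>M) + d" by linarith
  then show ?thesis unfolding int_pmf M_def .
qed

lemma onedir:
  fixes f g :: "'a \<Rightarrow> 'b pmf"
  assumes e: "0 \<le> eps" and e': "0 \<le> eps'" and dpos: "0 \<le> del'"
    and F: "\<And>x S. measure_pmf.prob (f x) S \<le> exp eps' * measure_pmf.prob (g x) S + del'"
    and H: "\<And>S. measure_pmf.prob mu S \<le> exp eps * measure_pmf.prob nu S + del"
  shows "measure_pmf.prob (bind_pmf mu f) S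
     \<le> exp (eps + eps') * measure_pmf.prob (bind_pmf nu g) S + (del + del')"
proof -
  define a where "a x = measure_pmf.prob (f x) S" for x
  define b where "b x = measure_pmf.prob (g x) S" for x
  define h where "h x = min 1 (exp eps' * b x)" for x
  have ab: "a x \<le> h x + del'" for x
  proof -
    have "a x \<le> 1" unfolding a_def by simp
    moreover have "a x \<le> exp eps' * b x + del'" using F[of x S] unfolding a_def b_def .
    ultimately show ?thesis using dpos unfolding h_def by linarith
  qed
  have bb: "0 \<le> b x" "b x \<le> 1" for x unfolding b_def by auto
  have h0: "0 \<le> h x" "h x \<le> 1" for x unfolding h_def b_def by auto
  have ia: "integrable (measure_pmf p) a" for p
  proof -
    have "\<bar>a x\<bar> \<le> 1" for x unfolding a_def by simp
    then show ?thesis by (intro measure_pmf.integrable_const_bound[where B=1]) auto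
  qed
  have ib: "integrable (measure_pmf p) b" for p
    using bb by (intro measure_pmf.integrable_const_bound[where B=1]) auto
  have ih: "integrable (measure_pmf p) h" for p
    using h0 by (intro measure_pmf.integrable_const_bound[where B=1]) auto
  have "(\<integral>x. a x \<partial>measure_pmf mu) \<le> (\<integral>x. h x + del' \<partial>measure_pmf mu)"
    by (rule integral_mono) (use ia ih ab in auto)
  also have "\<dots> = (\<integral>x. h x \<partial>measure_pmf mu) + del'"
    using h0 by (subst Bochner_Integration.integral_add)
      (auto intro!: measure_pmf.integrable_const_bound[where B=1])
  also have "(\<integral>x. h x \<partial>measure_pmf mu) \<le> exp eps * (\<integral>x. h x \<partial>measure_pmf nu) + del"
    by (rule key) (use H h0 in auto)
  also have "(\<integral>x. h x \<partial>measure_pmf nu) \<le> (\<integral>x. exp eps' * b x \<partial>measure_pmf nu)"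
    by (rule integral_mono) (use ih ib in \<open>auto simp: h_def\<close>)
  also have "\<dots> = exp eps' * (\<integral>x. b x \<partial>measure_pmf nu)" by simp
  finally show ?thesis unfolding bind_prob a_def b_def by (simp add: exp_add algebra_simps)
qed

theorem proposition2:
  shows "(\<forall>eps del. 0 \<le> eps \<longrightarrow> 0 \<le> del \<longrightarrow>
            (\<forall>mu :: 'a pmf. DPR eps del mu mu) \<and>
            (\<forall>mu nu :: 'a pmf. DPR eps del mu nu \<longrightarrow> DPR eps del nu mu))
       \<and> (\<forall>eps del eps' del' (mu :: 'a pmf) nu.
            0 \<le> eps \<longrightarrow> 0 \<le> del \<longrightarrow> eps \<le> eps' \<longrightarrow> del \<le> del' \<longrightarrow>
            DPR eps del mu nu \<longrightarrow> DPR eps' del' mu nu)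
       \<and> (\<forall>eps del eps' del' (f :: 'a \<Rightarrow> 'b pmf) g (mu :: 'a pmf) nu.
            0 \<le> eps \<longrightarrow> 0 \<le> del \<longrightarrow> 0 \<le> eps' \<longrightarrow> 0 \<le> del' \<longrightarrow>
            (\<forall>x. DPR eps' del' (f x) (g x)) \<longrightarrow>
            DPR eps del mu nu \<longrightarrow>
            DPR (eps + eps') (del + del') (bind_pmf mu f) (bind_pmf nu g))"
proof (intro conjI allI impI)
  fix eps del :: real and mu :: "'a pmf"
  assume "0 \<le> eps" "0 \<le> del"
  show "DPR eps del mu mu" unfolding DPR_def
  proof
    fix S
    have "measure_pmf.prob mu S \<le> exp eps * measure_pmf.prob mu S"
    proof -
      have "1 * measure_pmf.prob mu S \<le> exp eps * measure_pmf.prob mu S"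
        using \<open>0 \<le> eps\<close> by (intro mult_right_mono) auto
      then show ?thesis by simp
    qed
    then show "measure_pmf.prob mu S \<le> exp eps * measure_pmf.prob mu S + del \<and>
      measure_pmf.prob mu S \<le> exp eps * measure_pmf.prob mu S + del" using \<open>0 \<le> del\<close> by linarith
  qed
next
  fix eps del :: real and mu nu :: "'a pmf"
  assume "DPR eps del mu nu" then show "DPR eps del nu mu" unfolding DPR_def by blast
next
  fix eps del eps' del' :: real and mu nu :: "'a pmf"
  assume a: "eps \<le> eps'" "del \<le> del'" "DPR eps del mu nu"
  have "exp eps * measure_pmf.prob p S \<le> exp eps' * measure_pmf.prob p S" for p :: "'a pmf" and S
    using a(1) by (intro mult_right_mono) auto
  then show "DPR eps' del' mu nu" using a unfolding DPR_def
    by (smt (verit))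
next
  fix eps del eps' del' :: real and f g :: "'a \<Rightarrow> 'b pmf" and mu nu :: "'a pmf"
  assume a: "0 \<le> eps" "0 \<le> del" "0 \<le> eps'" "0 \<le> del'"
    "\<forall>x. DPR eps' del' (f x) (g x)" "DPR eps del mu nu"
  show "DPR (eps + eps') (del + del') (bind_pmf mu f) (bind_pmf nu g)"
    unfolding DPR_def
  proof (intro allI conjI)
    fix S
    show "measure_pmf.prob (bind_pmf mu f) S
        \<le> exp (eps + eps') * measure_pmf.prob (bind_pmf nu g) S + (del + del')"
      by (rule onedir) (use a in \<open>auto simp: DPR_def\<close>)
    show "measure_pmf.prob (bind_pmf nu g) S
        \<le> exp (eps + eps') * measure_pmf.prob (bind_pmf mu f) S + (del + del')"
      by (rule onedir) (use a in \<open>auto simp: DPR_def\<close>)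
  qed
qed

end
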